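(* Let $G$ be a $k$-degenerate graph with maximum degree $\Delta(G)$ and let $H$ be an $l$-degenerate graph. Then $G+_T H$ is $\max\{2\Delta(G),\,k+l\}$-degenerate.
   Context: A graph is $k$-degenerate if its vertices can be successively deleted so that each deleted vertex has degree at most $k$ at the time of deletion. The total graph $T(G)$ has vertex set $V(G)\cup E(G)$: it consists of $G$, together with, for each edge $e=xy$, edges $ex$ and $ey$, and edges $ee'$ whenever edges $e,e'$ are adjacent in $G$. The $T$-sum $G+_T H$ has vertex set $(V(G)\cup E(G))\times V(H)$, and $(u_1,u_2)\sim(v_1,v_2)$ iff [$u_1=v_1\in V(G)$ and $u_2v_2\in E(H)$] or [$u_2=v_2$ and $u_1v_1\in E(T(G))$]. *)

theory Defs
  imports Main
begin

definition graph :: "'a set \<Rightarrow> 'a set set \<Rightarrow> bool" where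
  "graph V E \<longleftrightarrow> finite V \<and> E \<subseteq> {{x, y} | x y. x \<in> V \<and> y \<in> V \<and> x \<noteq> y}"

definition degree_in :: "'a set \<Rightarrow> 'a set set \<Rightarrow> 'a \<Rightarrow> nat" where
  "degree_in V E v = card {u \<in> V. {u, v} \<in> E}"

definition max_degree :: "'a set \<Rightarrow> 'a set set \<Rightarrow> nat" where
  "max_degree V E = Max (insert 0 (degree_in V E ` V))"

inductive degenerate :: "nat \<Rightarrow> 'a set set \<Rightarrow> 'a set \<Rightarrow> bool" for k E where
  empty: "degenerate k E {}"
| delete: "v \<in> V \<Longrightarrow> degree_in V E v \<le> k \<Longrightarrow> degenerate k E (V - {v}) \<Longrightarrow> degenerate k E V"

definition total_V :: "'a set \<Rightarrow> 'a set set \<Rightarrow> ('a + 'a set) set" where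
  "total_V V E = Inl ` V \<union> Inr ` E"

definition total_E :: "'a set \<Rightarrow> 'a set set \<Rightarrow> ('a + 'a set) set set" where
  "total_E V E =
     {{Inl x, Inl y} | x y. {x, y} \<in> E}
   \<union> {{Inr e, Inl x} | e x. e \<in> E \<and> x \<in> e}
   \<union> {{Inr e, Inr e'} | e e'. e \<in> E \<and> e' \<in> E \<and> e \<noteq> e' \<and> e \<inter> e' \<noteq> {}}"

definition tsum_V :: "'a set \<Rightarrow> 'a set set \<Rightarrow> 'b set \<Rightarrow> 'b set set \<Rightarrow> (('a + 'a set) \<times> 'b) set" where
  "tsum_V VG EG VH EH = total_V VG EG \<times> VH"

definition tsum_E :: "'a set \<Rightarrow> 'a set set \<Rightarrow> 'b set \<Rightarrow> 'b set set \<Rightarrow> (('a + 'a set) \<times> 'b) set set" where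
  "tsum_E VG EG VH EH =
     {{(Inl v, u2), (Inl v, v2)} | v u2 v2. v \<in> VG \<and> {u2, v2} \<in> EH}
   \<union> {{(u1, w), (v1, w)} | u1 v1 w. w \<in> VH \<and> {u1, v1} \<in> total_E VG EG}"

end

theory Submission
  imports Defs
begin

lemma degenerate_finite: "degenerate k E V \<Longrightarrow> finite V"
  by (induction rule: degenerate.induct) auto

lemma degenerate_mono: "degenerate k E V \<Longrightarrow> k \<le> k' \<Longrightarrow> degenerate k' E V"
  by (induction rule: degenerate.induct) (auto intro: degenerate.intros)

lemma degree_mono: "finite V \<Longrightarrow> V' \<subseteq> V \<Longrightarrow> degree_in V' E v \<le> degree_in V E v"
  unfolding degree_in_def by (rule card_mono) auto

lemma degenerate_compose:
  assumes "finite A"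
  shows "finite V \<Longrightarrow> A \<subseteq> V \<Longrightarrow> (\<forall>a\<in>A. degree_in V E a \<le> k) \<Longrightarrow> degenerate k E (V - A)
     \<Longrightarrow> degenerate k E V"
  using assms
proof (induction A arbitrary: V rule: finite_induct)
  case empty
  then show ?case by simp
next
  case (insert a A)
  have d: "degenerate k E (V - {a})"
  proof (rule insert.IH)
    show "finite (V - {a})" using insert by simp
    show "A \<subseteq> V - {a}" using insert by auto
    show "\<forall>b\<in>A. degree_in (V - {a}) E b \<le> k"
    proof
      fix b assume b: "b \<in> A"
      have "degree_in (V - {a}) E b \<le> degree_in V E b"
        by (rule degree_mono) (use insert.prems in auto)
      moreover have "degree_in V E b \<le> k" using insert.prems(3) b by auto
      ultimately show "degree_in (V - {a}) E b \<le> k" by simp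
    qed
    have "V - {a} - A = V - insert a A" by blast
    then show "degenerate k E (V - {a} - A)" using insert.prems(4) by simp
  qed
  show ?case
    by (rule degenerate.delete[of a]) (use insert d in auto)
qed


lemma total_E_Inl: "{Inl a, Inl b} \<in> total_E V E \<Longrightarrow> {a, b} \<in> E"
proof -
  assume h: "{Inl a, Inl b} \<in> total_E V E"
  have "\<exists>x y. {Inl a, Inl b} = {Inl x, Inl y} \<and> {x, y} \<in> E"
    using h unfolding total_E_def by (auto simp: doubleton_eq_iff)
  then obtain x y where "{Inl a, Inl b} = {Inl x, Inl y}" "{x, y} \<in> E" by blast
  then have "{a, b} = {x, y}" by (auto simp: doubleton_eq_iff)
  with \<open>{x, y} \<in> E\<close> show ?thesis by simp
qed

lemma total_E_Inr: "{z, Inr e} \<in> total_E V E \<Longrightarrow>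
   (\<exists>a. z = Inl a \<and> a \<in> e \<and> e \<in> E) \<or> (\<exists>e'. z = Inr e' \<and> e' \<in> E \<and> e' \<noteq> e \<and> e' \<inter> e \<noteq> {})"
  unfolding total_E_def by (auto simp: doubleton_eq_iff)


lemma tsum_E_char:
  assumes "{u, (z, w)} \<in> tsum_E VG EG VH EH"
  shows "(\<exists>a w'. z = Inl a \<and> u = (Inl a, w') \<and> {w', w} \<in> EH) \<or> (\<exists>z'. u = (z', w) \<and> {z', z} \<in> total_E VG EG)"
proof -
  from assms consider
    (a) v u2 v2 where "{u, (z, w)} = {(Inl v, u2), (Inl v, v2)}" "{u2, v2} \<in> EH"
  | (b) u1 v1 w0 where "{u, (z, w)} = {(u1, w0), (v1, w0)}" "{u1, v1} \<in> total_E VG EG"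
    unfolding tsum_E_def by blast
  then show ?thesis
  proof cases
    case a
    then have "(u = (Inl v, u2) \<and> (z, w) = (Inl v, v2)) \<or> (u = (Inl v, v2) \<and> (z, w) = (Inl v, u2))"
      by (simp add: doubleton_eq_iff)
    then show ?thesis using a(2) by (auto simp: insert_commute)
  next
    case b
    then have "(u = (u1, w0) \<and> (z, w) = (v1, w0)) \<or> (u = (v1, w0) \<and> (z, w) = (u1, w0))"
      by (simp add: doubleton_eq_iff)
    then show ?thesis using b(2) by (auto simp: insert_commute)
  qed
qed


lemma product_inner:
  fixes VG :: "'a set" and EH :: "'b set set"
  assumes "degenerate k EG U"
  shows "finite W \<Longrightarrow> w \<in> W \<Longrightarrow> degree_in W EH w \<le> l \<Longrightarrow>
    degenerate (k+l) (tsum_E VG EG VH EH) (Inl ` VG \<times> (W - {w})) \<Longrightarrow>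
    degenerate (k+l) (tsum_E VG EG VH EH) (Inl ` U \<times> {w} \<union> Inl ` VG \<times> (W - {w}))"
  using assms
proof (induction rule: degenerate.induct)
  case empty
  then show ?case by simp
next
  case (delete v U)
  let ?T = "tsum_E VG EG VH EH"
  let ?S = "Inl ` U \<times> {w} \<union> Inl ` VG \<times> (W - {w})"
  have fU: "finite U" using degenerate_finite[OF delete(3)] by simp
  have eq: "?S - {(Inl v, w)} = Inl ` (U - {v}) \<times> {w} \<union> Inl ` VG \<times> (W - {w})" by auto
  have sub: "{u \<in> ?S. {u, (Inl v, w)} \<in> ?T} \<subseteq>
     (\<lambda>v'. ((Inl v', w) :: ('a + 'a set) \<times> 'b)) ` {v' \<in> U. {v', v} \<in> EG} \<union> (\<lambda>w'. ((Inl v, w') :: ('a + 'a set) \<times> 'b)) ` {w' \<in> W. {w', w} \<in> EH}"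
  proof
    fix u assume u: "u \<in> {u \<in> ?S. {u, (Inl v, w)} \<in> ?T}"
    then have uS: "u \<in> ?S" and ue: "{u, (Inl v, w)} \<in> ?T" by auto
    from tsum_E_char[OF ue] show "u \<in> (\<lambda>v'. ((Inl v', w) :: ('a + 'a set) \<times> 'b)) ` {v' \<in> U. {v', v} \<in> EG} \<union> (\<lambda>w'. ((Inl v, w') :: ('a + 'a set) \<times> 'b)) ` {w' \<in> W. {w', w} \<in> EH}"
    proof
      assume "\<exists>a w'. Inl v = Inl a \<and> u = (Inl a, w') \<and> {w', w} \<in> EH"
      then obtain w' where "u = (Inl v, w')" "{w', w} \<in> EH" by auto
      moreover have "w' \<in> W" using uS \<open>u = (Inl v, w')\<close> \<open>w \<in> W\<close> by auto
      ultimately show ?thesis by auto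
    next
      assume "\<exists>z'. u = (z', w) \<and> {z', Inl v} \<in> total_E VG EG"
      then obtain z' where z: "u = (z', w)" "{z', Inl v} \<in> total_E VG EG" by auto
      then obtain v' where "z' = Inl v'" "v' \<in> U" using uS by auto
      with z total_E_Inl show ?thesis by fastforce
    qed
  qed
  have "degree_in ?S ?T (Inl v, w) \<le> card ((\<lambda>v'. ((Inl v', w) :: ('a + 'a set) \<times> 'b)) ` {v' \<in> U. {v', v} \<in> EG} \<union> (\<lambda>w'. ((Inl v, w') :: ('a + 'a set) \<times> 'b)) ` {w' \<in> W. {w', w} \<in> EH})"
    
  proof -
    have fin: "finite ((\<lambda>v'. ((Inl v', w) :: ('a + 'a set) \<times> 'b)) ` {v' \<in> U. {v', v} \<in> EG} \<union> (\<lambda>w'. ((Inl v, w') :: ('a + 'a set) \<times> 'b)) ` {w' \<in> W. {w', w} \<in> EH})"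
      using fU \<open>finite W\<close> by auto
    show ?thesis using card_mono[OF fin sub] unfolding degree_in_def by simp
  qed
  also have "\<dots> \<le> card ((\<lambda>v'. ((Inl v', w) :: ('a + 'a set) \<times> 'b)) ` {v' \<in> U. {v', v} \<in> EG}) + card ((\<lambda>w'. ((Inl v, w') :: ('a + 'a set) \<times> 'b)) ` {w' \<in> W. {w', w} \<in> EH})"
    by (rule card_Un_le)
  also have "\<dots> \<le> degree_in U EG v + degree_in W EH w"
    unfolding degree_in_def using fU \<open>finite W\<close> by (intro add_mono card_image_le) auto
  also have "\<dots> \<le> k + l" using delete by simp
  finally have dg: "degree_in ?S ?T (Inl v, w) \<le> k + l" .
  have "degenerate (k+l) ?T (?S - {(Inl v, w)})" unfolding eq using delete by blast
  then show ?case by (rule degenerate.delete[rotated 2]) (use dg delete in auto)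
qed

lemma product:
  assumes "degenerate l EH W" "degenerate k EG VG"
  shows "degenerate (k+l) (tsum_E VG EG VH EH) (Inl ` VG \<times> W)"
  using assms
proof (induction rule: degenerate.induct)
  case empty
  then show ?case by (simp add: degenerate.empty)
next
  case (delete w W)
  have "finite W" using degenerate_finite[OF delete(3)] by simp
  have eqW: "Inl ` VG \<times> W = Inl ` VG \<times> {w} \<union> Inl ` VG \<times> (W - {w})" using delete(1) by auto
  show ?case by (subst eqW) (rule product_inner[OF delete(5) \<open>finite W\<close> delete(1) delete(2) delete(4)[OF delete(5)]])
qed


lemma graph_finite_E: "graph V E \<Longrightarrow> finite E"
proof -
  assume g: "graph V E"
  then have "E \<subseteq> Pow V" unfolding graph_def by auto
  moreover have "finite V" using g unfolding graph_def by auto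
  ultimately show ?thesis by (meson finite_Pow_iff finite_subset)
qed

lemma incident_card:
  assumes g: "graph V E"
  shows "card {e' \<in> E. x \<in> e'} \<le> degree_in V E x"
proof -
  have fV: "finite V" using g unfolding graph_def by auto
  have "{e' \<in> E. x \<in> e'} \<subseteq> (\<lambda>u. {u, x}) ` {u \<in> V. {u, x} \<in> E}"
  proof
    fix e' assume "e' \<in> {e' \<in> E. x \<in> e'}"
    then have e': "e' \<in> E" "x \<in> e'" by auto
    then obtain a b where ab: "e' = {a, b}" "a \<in> V" "b \<in> V" using g unfolding graph_def by blast
    show "e' \<in> (\<lambda>u. {u, x}) ` {u \<in> V. {u, x} \<in> E}"
    proof (cases "x = a")
      case True
      then show ?thesis using ab e' by (auto simp: insert_commute intro!: image_eqI[of _ _ b])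
    next
      case False
      then have "x = b" using ab e' by auto
      then show ?thesis using ab e' by (auto intro!: image_eqI[of _ _ a])
    qed
  qed
  then have "card {e' \<in> E. x \<in> e'} \<le> card ((\<lambda>u. {u, x}) ` {u \<in> V. {u, x} \<in> E})"
    using fV by (intro card_mono) auto
  also have "\<dots> \<le> card {u \<in> V. {u, x} \<in> E}" using fV by (intro card_image_le) auto
  finally show ?thesis unfolding degree_in_def .
qed

lemma degree_le_max: "finite V \<Longrightarrow> x \<in> V \<Longrightarrow> degree_in V E x \<le> max_degree V E"
  unfolding max_degree_def by (intro Max_ge) auto

lemma edge_degree:
  fixes VG :: "'a set" and VH :: "'b set"
  assumes g: "graph VG EG" and e: "e \<in> EG"
  shows "degree_in (tsum_V VG EG VH EH) (tsum_E VG EG VH EH) (Inr e, w) \<le> 2 * max_degree VG EG"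
proof -
  obtain x y where xy: "e = {x, y}" "x \<in> VG" "y \<in> VG" "x \<noteq> y" using g e unfolding graph_def by blast
  have fV: "finite VG" using g unfolding graph_def by auto
  have fE: "finite EG" using graph_finite_E[OF g] .
  define Sx where "Sx = {e' \<in> EG. x \<in> e'}"
  define Sy where "Sy = {e' \<in> EG. y \<in> e'}"
  let ?B = "Inl ` {x, y} \<union> Inr ` ((Sx - {e}) \<union> (Sy - {e}))"
  have sub: "{u \<in> tsum_V VG EG VH EH. {u, (Inr e, w)} \<in> tsum_E VG EG VH EH} \<subseteq> (\<lambda>z. (z, w)) ` ?B"
  proof
    fix u assume "u \<in> {u \<in> tsum_V VG EG VH EH. {u, (Inr e, w)} \<in> tsum_E VG EG VH EH}"
    then have ue: "{u, (Inr e, w)} \<in> tsum_E VG EG VH EH" by auto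
    from tsum_E_char[OF ue] obtain z' where z: "u = (z', w)" "{z', Inr e} \<in> total_E VG EG" by auto
    from total_E_Inr[OF z(2)] have "z' \<in> ?B"
      using xy unfolding Sx_def Sy_def by auto
    then show "u \<in> (\<lambda>z. (z, w)) ` ?B" using z by auto
  qed
  have fB: "finite ?B" using fE unfolding Sx_def Sy_def by auto
  have "degree_in (tsum_V VG EG VH EH) (tsum_E VG EG VH EH) (Inr e, w) \<le> card ((\<lambda>z. (z, w)) ` ?B)"
    unfolding degree_in_def using fB by (intro card_mono sub) auto
  also have "\<dots> \<le> card ?B" using fB by (intro card_image_le)
  also have "\<dots> \<le> card (Inl ` {x, y} :: ('a + 'a set) set) + card (Inr ` ((Sx - {e}) \<union> (Sy - {e})) :: ('a + 'a set) set)"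
    by (rule card_Un_le)
  also have "\<dots> \<le> 2 + (card (Sx - {e}) + card (Sy - {e}))"
  proof (intro add_mono)
    show "card (Inl ` {x, y} :: ('a + 'a set) set) \<le> 2"
      by (metis card_image_le card_2_iff finite.emptyI finite.insertI xy(4) order.refl)
    have "card (Inr ` ((Sx - {e}) \<union> (Sy - {e})) :: ('a + 'a set) set) \<le> card ((Sx - {e}) \<union> (Sy - {e}))"
      using fE unfolding Sx_def Sy_def by (intro card_image_le) auto
    also have "\<dots> \<le> card (Sx - {e}) + card (Sy - {e})" by (rule card_Un_le)
    finally show "card (Inr ` ((Sx - {e}) \<union> (Sy - {e})) :: ('a + 'a set) set) \<le> card (Sx - {e}) + card (Sy - {e})" .
  qed
  also have "\<dots> \<le> degree_in VG EG x + degree_in VG EG y"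
  proof -
    have cx: "card Sx \<le> degree_in VG EG x" unfolding Sx_def by (rule incident_card[OF g])
    have cy: "card Sy \<le> degree_in VG EG y" unfolding Sy_def by (rule incident_card[OF g])
    have "e \<in> Sx" "e \<in> Sy" using e xy unfolding Sx_def Sy_def by auto
    moreover have "finite Sx" "finite Sy" using fE unfolding Sx_def Sy_def by auto
    ultimately have "card (Sx - {e}) + 1 = card Sx" "card (Sy - {e}) + 1 = card Sy"
      by (metis card_Diff1_less card_Suc_Diff1 Suc_eq_plus1)+
    then show ?thesis using cx cy by linarith
  qed
  also have "\<dots> \<le> 2 * max_degree VG EG"
    using degree_le_max[OF fV xy(2), of EG] degree_le_max[OF fV xy(3), of EG] by linarith
  finally show ?thesis .
qed

theorem theorem4:
  fixes VG :: "'a set" and EG :: "'a set set" and VH :: "'b set" and EH :: "'b set set"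
    and k l :: nat
  assumes "graph VG EG" and "graph VH EH"
    and "degenerate k EG VG" and "degenerate l EH VH"
  shows "degenerate (max (2 * max_degree VG EG) (k + l)) (tsum_E VG EG VH EH) (tsum_V VG EG VH EH)"
proof (rule degenerate_compose[of "Inr ` EG \<times> VH"])
  have fE: "finite EG" using graph_finite_E[OF assms(1)] .
  have fVG: "finite VG" using assms(1) unfolding graph_def by auto
  have fVH: "finite VH" using assms(2) unfolding graph_def by auto
  show "finite (Inr ` EG \<times> VH :: (('a + 'a set) \<times> 'b) set)" using fE fVH by auto
  show "finite (tsum_V VG EG VH EH)" using fE fVG fVH unfolding tsum_V_def total_V_def by auto
  show "Inr ` EG \<times> VH \<subseteq> tsum_V VG EG VH EH" unfolding tsum_V_def total_V_def by auto
  show "\<forall>a\<in>Inr ` EG \<times> VH. degree_in (tsum_V VG EG VH EH) (tsum_E VG EG VH EH) a \<le> max (2 * max_degree VG EG) (k + l)"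
  proof
    fix a :: "('a + 'a set) \<times> 'b" assume "a \<in> Inr ` EG \<times> VH"
    then obtain e w where a: "a = (Inr e, w)" "e \<in> EG" by auto
    show "degree_in (tsum_V VG EG VH EH) (tsum_E VG EG VH EH) a \<le> max (2 * max_degree VG EG) (k + l)"
      using edge_degree[OF assms(1) a(2), of VH EH w] a(1) by simp
  qed
  have eq: "tsum_V VG EG VH EH - Inr ` EG \<times> VH = Inl ` VG \<times> VH" unfolding tsum_V_def total_V_def by auto
  show "degenerate (max (2 * max_degree VG EG) (k + l)) (tsum_E VG EG VH EH) (tsum_V VG EG VH EH - Inr ` EG \<times> VH)"
    unfolding eq by (rule degenerate_mono[OF product[OF assms(4) assms(3)]]) simp
qed

end
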